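(* For every reduction $S$ in a TRS the following equivalences hold: (i) $S$ starting in $s$ is weakly $p$-continuous and total iff $S$ starting in $s$ is weakly $m$-continuous; and (ii) $S$ weakly $p$-converges from $s$ to $t$ and is total iff $S$ weakly $m$-converges from $s$ to $t$.
   Context: A TRS $\mathcal{R}=(\Sigma,R)$ has rules $l\to r$ over possibly infinite terms. Total terms are the (possibly infinite) terms over $\Sigma$ and variables; partial terms are terms over $\Sigma_\bot=\Sigma\uplus\{\bot\}$. The order $s\le_\bot t$ holds iff $s$ is obtained from $t$ by replacing some subterm occurrences by $\bot$; partial terms with $\le_\bot$ form a complete semilattice. For a non-empty sequence $(a_\iota)_{\iota<\alpha}$ its limit inferior is $\liminf_{\iota\to\alpha}a_\iota=\bigvee_{\beta<\alpha}\bigwedge_{\beta\le\iota<\alpha}a_\iota$ (least upper bound over $\beta$ of greatest lower bounds of the tails). On total terms, $d(s,t)=2^{-k}$ with $k$ the minimal depth at which $s,t$ differ ($d(s,s)=0$); this is a complete ultrametric. A reduction is a transfinite sequence of steps $S=(t_\iota\to_{\pi_\iota}t_{\iota+1})_{\iota<\alpha}$ (for partial terms, in $(\Sigma_\bot,R)$). $S$ is weakly $p$-continuous if $\liminf_{\iota\to\lambda}t_\iota=t_\lambda$ for every limit $\lambda<\alpha$, and weakly $p$-converges to $t$ if it is weakly $p$-continuous and $t=\liminf_{\iota\to\hat\alpha}t_\iota$ (with $\hat\alpha=\alpha+1$ if $S$ is closed, $\alpha$ if open, so for closed $S$, $t$ is its last term). Weak $m$-continuity/convergence are defined identically with the metric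 limit $\lim$ in place of $\liminf$ (and total terms). "Total" means all terms of $S$ (and the final term $t$) are total. *)

theory Defs
  imports Complex_Main "HOL-Library.Sublist"
begin

text \<open>Node labels: function symbols of the signature, variables, and the extra
  constant bot (only occurring in partial terms).\<close>
datatype ('f, 'v) sym = Fun 'f | Var 'v | Bot

text \<open>A (possibly infinite) term is a map from positions (lists of argument
  indices) to labels; None means the position does not belong to the term.\<close>
type_synonym ('f, 'v) trm = "nat list \<Rightarrow> ('f, 'v) sym option"

text \<open>The signature is given by an arity function ar.  A partial term is a
  well-formed tree over Sigma extended by bot (bot, variables: arity 0).\<close>
definition is_pterm :: "('f \<Rightarrow> nat) \<Rightarrow> ('f, 'v) trm \<Rightarrow> bool" where
  "is_pterm ar t \<longleftrightarrow> t [] \<noteq> None \<and>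
     (\<forall>p i. t (p @ [i]) \<noteq> None \<longleftrightarrow> (\<exists>f. t p = Some (Fun f) \<and> i < ar f))"

definition is_total :: "('f \<Rightarrow> nat) \<Rightarrow> ('f, 'v) trm \<Rightarrow> bool" where
  "is_total ar t \<longleftrightarrow> is_pterm ar t \<and> (\<forall>p. t p \<noteq> Some Bot)"

definition poss :: "('f, 'v) trm \<Rightarrow> nat list set" where
  "poss t = {p. t p \<noteq> None}"

definition vars :: "('f, 'v) trm \<Rightarrow> 'v set" where
  "vars t = {x. \<exists>p. t p = Some (Var x)}"

definition subterm_at :: "('f, 'v) trm \<Rightarrow> nat list \<Rightarrow> ('f, 'v) trm" where
  "subterm_at t \<pi> = (\<lambda>p. t (\<pi> @ p))"

definition replace_at :: "('f, 'v) trm \<Rightarrow> nat list \<Rightarrow> ('f, 'v) trm \<Rightarrow> ('f, 'v) trm" where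
  "replace_at t \<pi> s = (\<lambda>p. if prefix \<pi> p then s (drop (length \<pi>) p) else t p)"

definition subst_apply :: "('v \<Rightarrow> ('f, 'v) trm) \<Rightarrow> ('f, 'v) trm \<Rightarrow> ('f, 'v) trm" where
  "subst_apply \<sigma> l = (\<lambda>p.
     if \<exists>q x. prefix q p \<and> l q = Some (Var x)
     then (case SOME qx. prefix (fst qx) p \<and> l (fst qx) = Some (Var (snd qx)) of
             (q, x) \<Rightarrow> \<sigma> x (drop (length q) p))
     else l p)"

definition is_TRS :: "('f \<Rightarrow> nat) \<Rightarrow> (('f, 'v) trm \<times> ('f, 'v) trm) set \<Rightarrow> bool" where
  "is_TRS ar R \<longleftrightarrow> (\<forall>(l, r) \<in> R. is_total ar l \<and> is_total ar r \<and>
      (\<forall>x. l [] \<noteq> Some (Var x)) \<and> vars r \<subseteq> vars l)"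

text \<open>A rewrite step t ->_pi u using a rule of R, where all terms (and the
  substitution) range over the term class T (partial or total terms).\<close>
definition rstep :: "(('f, 'v) trm \<Rightarrow> bool) \<Rightarrow> (('f, 'v) trm \<times> ('f, 'v) trm) set \<Rightarrow>
    ('f, 'v) trm \<Rightarrow> nat list \<Rightarrow> ('f, 'v) trm \<Rightarrow> bool" where
  "rstep T R t \<pi> u \<longleftrightarrow> T t \<and> T u \<and> \<pi> \<in> poss t \<and>
     (\<exists>(l, r) \<in> R. \<exists>\<sigma>. (\<forall>x. T (\<sigma> x)) \<and>
        subterm_at t \<pi> = subst_apply \<sigma> l \<and> u = replace_at t \<pi> (subst_apply \<sigma> r))"

text \<open>Ordinals are represented by elements of an arbitrary well-ordered type;
  the initial segment below alpha is order-isomorphic to the ordinal alpha.\<close>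
definition ozero :: "'o::wellorder" where
  "ozero = (LEAST i. True)"

definition osuc :: "'o::wellorder \<Rightarrow> 'o" where
  "osuc i = (LEAST k. i < k)"

definition is_limit :: "'o::wellorder \<Rightarrow> bool" where
  "is_limit lam \<longleftrightarrow> (\<exists>i. i < lam) \<and> (\<forall>i<lam. \<exists>k. i < k \<and> k < lam)"

text \<open>Index set of the terms of a reduction of length alpha, i.e. the indices
  below alpha-hat: alpha-hat = alpha + 1 if S is closed (alpha not a limit
  ordinal), alpha-hat = alpha if S is open (alpha a limit ordinal).\<close>
definition idx :: "'o::wellorder \<Rightarrow> 'o set" where
  "idx \<alpha> = (if is_limit \<alpha> then {i. i < \<alpha>} else {i. i \<le> \<alpha>})"

text \<open>A reduction S = (t_i ->_{pi_i} t_{i+1})_{i<alpha}, given by its length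
  alpha, its terms ts (indices in idx alpha) and its step positions ps.\<close>
definition is_reduction :: "(('f, 'v) trm \<Rightarrow> bool) \<Rightarrow> (('f, 'v) trm \<times> ('f, 'v) trm) set \<Rightarrow>
    'o::wellorder \<Rightarrow> ('o \<Rightarrow> ('f, 'v) trm) \<Rightarrow> ('o \<Rightarrow> nat list) \<Rightarrow> bool" where
  "is_reduction T R \<alpha> ts ps \<longleftrightarrow> (\<forall>i \<in> idx \<alpha>. T (ts i)) \<and>
     (\<forall>i<\<alpha>. rstep T R (ts i) (ps i) (ts (osuc i)))"

definition replace_bot :: "('f, 'v) trm \<Rightarrow> nat list set \<Rightarrow> ('f, 'v) trm" where
  "replace_bot t P = (\<lambda>p. if \<exists>q\<in>P. strict_prefix q p then None
                          else if p \<in> P then Some Bot else t p)"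

definition le_bot :: "('f, 'v) trm \<Rightarrow> ('f, 'v) trm \<Rightarrow> bool" where
  "le_bot s t \<longleftrightarrow> (\<exists>P \<subseteq> poss t. s = replace_bot t P)"

definition is_glb :: "('f \<Rightarrow> nat) \<Rightarrow> ('f, 'v) trm set \<Rightarrow> ('f, 'v) trm \<Rightarrow> bool" where
  "is_glb ar A g \<longleftrightarrow> is_pterm ar g \<and> (\<forall>a\<in>A. le_bot g a) \<and>
     (\<forall>h. is_pterm ar h \<and> (\<forall>a\<in>A. le_bot h a) \<longrightarrow> le_bot h g)"

definition is_lub :: "('f \<Rightarrow> nat) \<Rightarrow> ('f, 'v) trm set \<Rightarrow> ('f, 'v) trm \<Rightarrow> bool" where
  "is_lub ar A g \<longleftrightarrow> is_pterm ar g \<and> (\<forall>a\<in>A. le_bot a g) \<and>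
     (\<forall>h. is_pterm ar h \<and> (\<forall>a\<in>A. le_bot a h) \<longrightarrow> le_bot g h)"

definition glb :: "('f \<Rightarrow> nat) \<Rightarrow> ('f, 'v) trm set \<Rightarrow> ('f, 'v) trm" where
  "glb ar A = (THE g. is_glb ar A g)"

definition lub :: "('f \<Rightarrow> nat) \<Rightarrow> ('f, 'v) trm set \<Rightarrow> ('f, 'v) trm" where
  "lub ar A = (THE g. is_lub ar A g)"

definition pliminf :: "('f \<Rightarrow> nat) \<Rightarrow> 'o::wellorder set \<Rightarrow> ('o \<Rightarrow> ('f, 'v) trm) \<Rightarrow> ('f, 'v) trm" where
  "pliminf ar I a = lub ar {glb ar (a ` {i \<in> I. b \<le> i}) | b. b \<in> I}"

definition weakly_p_continuous :: "('f \<Rightarrow> nat) \<Rightarrow> (('f, 'v) trm \<times> ('f, 'v) trm) set \<Rightarrow>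
    'o::wellorder \<Rightarrow> ('o \<Rightarrow> ('f, 'v) trm) \<Rightarrow> ('o \<Rightarrow> nat list) \<Rightarrow> bool" where
  "weakly_p_continuous ar R \<alpha> ts ps \<longleftrightarrow> is_reduction (is_pterm ar) R \<alpha> ts ps \<and>
     (\<forall>lam<\<alpha>. is_limit lam \<longrightarrow> pliminf ar {i. i < lam} ts = ts lam)"

definition weakly_p_converges :: "('f \<Rightarrow> nat) \<Rightarrow> (('f, 'v) trm \<times> ('f, 'v) trm) set \<Rightarrow>
    'o::wellorder \<Rightarrow> ('o \<Rightarrow> ('f, 'v) trm) \<Rightarrow> ('o \<Rightarrow> nat list) \<Rightarrow> ('f, 'v) trm \<Rightarrow> bool" where
  "weakly_p_converges ar R \<alpha> ts ps t \<longleftrightarrow> weakly_p_continuous ar R \<alpha> ts ps \<and>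
     t = pliminf ar (idx \<alpha>) ts"

definition total_red :: "('f \<Rightarrow> nat) \<Rightarrow> 'o::wellorder \<Rightarrow> ('o \<Rightarrow> ('f, 'v) trm) \<Rightarrow> bool" where
  "total_red ar \<alpha> ts \<longleftrightarrow> (\<forall>i \<in> idx \<alpha>. is_total ar (ts i))"

definition tdist :: "('f, 'v) trm \<Rightarrow> ('f, 'v) trm \<Rightarrow> real" where
  "tdist s t = (if s = t then 0
                else inverse (2 ^ (LEAST k. \<exists>p. length p = k \<and> s p \<noteq> t p)))"

definition mlim :: "'o::wellorder set \<Rightarrow> ('o \<Rightarrow> ('f, 'v) trm) \<Rightarrow> ('f, 'v) trm \<Rightarrow> bool" where
  "mlim I a t \<longleftrightarrow> (\<forall>\<epsilon>>0. \<exists>b\<in>I. \<forall>i\<in>I. b \<le> i \<longrightarrow> tdist (a i) t < \<epsilon>)"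

definition weakly_m_continuous :: "('f \<Rightarrow> nat) \<Rightarrow> (('f, 'v) trm \<times> ('f, 'v) trm) set \<Rightarrow>
    'o::wellorder \<Rightarrow> ('o \<Rightarrow> ('f, 'v) trm) \<Rightarrow> ('o \<Rightarrow> nat list) \<Rightarrow> bool" where
  "weakly_m_continuous ar R \<alpha> ts ps \<longleftrightarrow> is_reduction (is_total ar) R \<alpha> ts ps \<and>
     (\<forall>lam<\<alpha>. is_limit lam \<longrightarrow> mlim {i. i < lam} ts (ts lam))"

definition weakly_m_converges :: "('f \<Rightarrow> nat) \<Rightarrow> (('f, 'v) trm \<times> ('f, 'v) trm) set \<Rightarrow>
    'o::wellorder \<Rightarrow> ('o \<Rightarrow> ('f, 'v) trm) \<Rightarrow> ('o \<Rightarrow> nat list) \<Rightarrow> ('f, 'v) trm \<Rightarrow> bool" where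
  "weakly_m_converges ar R \<alpha> ts ps t \<longleftrightarrow> weakly_m_continuous ar R \<alpha> ts ps \<and>
     is_total ar t \<and> mlim (idx \<alpha>) ts t"

end

theory Submission
  imports Defs
begin

lemma pt_root: "is_pterm ar t \<Longrightarrow> t [] \<noteq> None"
  by (simp add: is_pterm_def)

lemma pt_child: "is_pterm ar t \<Longrightarrow> t (p @ [i]) \<noteq> None \<longleftrightarrow> (\<exists>f. t p = Some (Fun f) \<and> i < ar f)"
  by (simp add: is_pterm_def)

lemma pt_anc: "is_pterm ar t \<Longrightarrow> t (q @ i # r) \<noteq> None \<Longrightarrow> \<exists>f. t q = Some (Fun f) \<and> i < ar f"
proof (induction r rule: rev_induct)
  case Nil
  then show ?case using pt_child[of ar t q i] by simp
next
  case (snoc x xs)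
  have "t ((q @ i # xs) @ [x]) \<noteq> None" using snoc.prems by simp
  then have "t (q @ i # xs) \<noteq> None" using pt_child[OF snoc.prems(1)] by blast
  then show ?case using snoc by blast
qed

lemma pt_strict_prefix: "is_pterm ar t \<Longrightarrow> t p \<noteq> None \<Longrightarrow> strict_prefix q p \<Longrightarrow> \<exists>f. t q = Some (Fun f)"
  by (metis pt_anc strict_prefixE')

lemma strict_prefix_snoc_iff: "strict_prefix q (p @ [i]) \<longleftrightarrow> prefix q p"
  by (metis prefix_order.less_le prefix_snoc prefix_snocD)

lemma le_bot_iff:
  assumes s: "is_pterm ar s" and t: "is_pterm ar t"
  shows "le_bot s t \<longleftrightarrow> (\<forall>p. s p \<noteq> None \<longrightarrow> s p = Some Bot \<or> s p = t p) \<and> (\<forall>p. s p = Some Bot \<longrightarrow> t p \<noteq> None)"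
proof
  assume "le_bot s t"
  then obtain P where P: "P \<subseteq> poss t" "s = replace_bot t P" unfolding le_bot_def by blast
  show "(\<forall>p. s p \<noteq> None \<longrightarrow> s p = Some Bot \<or> s p = t p) \<and> (\<forall>p. s p = Some Bot \<longrightarrow> t p \<noteq> None)"
    using P unfolding replace_bot_def poss_def by (auto split: if_splits)
next
  assume A: "(\<forall>p. s p \<noteq> None \<longrightarrow> s p = Some Bot \<or> s p = t p) \<and> (\<forall>p. s p = Some Bot \<longrightarrow> t p \<noteq> None)"
  define P where "P = {p. s p = Some Bot}"
  have Psub: "P \<subseteq> poss t" using A unfolding P_def poss_def by auto
  have key: "(\<forall>q. strict_prefix q p \<longrightarrow> s q \<noteq> Some Bot) \<longrightarrow> s p \<noteq> Some Bot \<longrightarrow> s p = t p" for p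
  proof (induction p rule: rev_induct)
    case Nil
    then show ?case using A pt_root[OF s] by blast
  next
    case (snoc i p)
    show ?case
    proof (intro impI)
      assume h1: "\<forall>q. strict_prefix q (p @ [i]) \<longrightarrow> s q \<noteq> Some Bot" and h2: "s (p @ [i]) \<noteq> Some Bot"
      show "s (p @ [i]) = t (p @ [i])"
      proof (cases "s (p @ [i]) = None")
        case False
        then show ?thesis using A h2 by blast
      next
        case True
        have "\<forall>q. strict_prefix q p \<longrightarrow> s q \<noteq> Some Bot"
          using h1 by (simp add: strict_prefix_snoc_iff prefix_order.less_imp_le)
        moreover have "s p \<noteq> Some Bot" using h1 by (simp add: strict_prefix_snoc_iff)
        ultimately have "s p = t p" using snoc.IH by blast
        then have "t (p @ [i]) = None" using True pt_child[OF s, of p i] pt_child[OF t, of p i] by auto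
        then show ?thesis using True by simp
      qed
    qed
  qed
  have "s = replace_bot t P"
  proof
    fix p
    show "s p = replace_bot t P p"
    proof (cases "\<exists>q\<in>P. strict_prefix q p")
      case True
      then obtain q where q: "s q = Some Bot" "strict_prefix q p" unfolding P_def by blast
      have "s p = None"
      proof (rule ccontr)
        assume "s p \<noteq> None"
        then obtain f where "s q = Some (Fun f)" using pt_strict_prefix[OF s _ q(2)] by blast
        then show False using q(1) by simp
      qed
      then show ?thesis using True unfolding replace_bot_def by simp
    next
      case False
      then show ?thesis using key[of p] unfolding replace_bot_def P_def by auto
    qed
  qed
  then show "le_bot s t" using Psub unfolding le_bot_def by blast
qed

lemma le_bot_antisym:
  assumes "is_pterm ar s" "is_pterm ar t" "le_bot s t" "le_bot t s" shows "s = t"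
proof
  fix p
  have a: "(\<forall>p. s p \<noteq> None \<longrightarrow> s p = Some Bot \<or> s p = t p) \<and> (\<forall>p. s p = Some Bot \<longrightarrow> t p \<noteq> None)"
    using assms le_bot_iff by blast
  have b: "(\<forall>p. t p \<noteq> None \<longrightarrow> t p = Some Bot \<or> t p = s p) \<and> (\<forall>p. t p = Some Bot \<longrightarrow> s p \<noteq> None)"
    using assms le_bot_iff by blast
  show "s p = t p"
    using a[THEN conjunct1, rule_format, of p] a[THEN conjunct2, rule_format, of p]
      b[THEN conjunct1, rule_format, of p] b[THEN conjunct2, rule_format, of p]
    by (cases "s p"; cases "t p") auto
qed

lemma glb_eq: "is_glb ar A g \<Longrightarrow> glb ar A = g"
  unfolding glb_def
  by (rule the_equality) (auto simp: is_glb_def intro: le_bot_antisym)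

lemma lub_eq: "is_lub ar A g \<Longrightarrow> lub ar A = g"
  unfolding lub_def
  by (rule the_equality) (auto simp: is_lub_def intro: le_bot_antisym)


definition agr :: "('f, 'v) trm set \<Rightarrow> nat list \<Rightarrow> bool" where
  "agr A q \<longleftrightarrow> (\<forall>a\<in>A. \<forall>b\<in>A. a q = b q)"

definition gcon :: "('f, 'v) trm set \<Rightarrow> ('f, 'v) trm" where
  "gcon A = (\<lambda>p. if (\<forall>q. strict_prefix q p \<longrightarrow> agr A q)
      then (if agr A p then (SOME a. a \<in> A) p else Some Bot) else None)"

lemma gcon_pterm:
  assumes ne: "A \<noteq> {}" and pt: "\<forall>a\<in>A. is_pterm ar a"
  shows "is_pterm ar (gcon A)"
proof -
  define a0 where "a0 = (SOME a. a \<in> A)"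
  have a0: "a0 \<in> A" using ne unfolding a0_def by (simp add: some_in_eq)
  have root: "gcon A [] \<noteq> None"
    using pt_root pt a0 unfolding gcon_def a0_def by auto
  have child: "gcon A (p @ [i]) \<noteq> None \<longleftrightarrow> (\<exists>f. gcon A p = Some (Fun f) \<and> i < ar f)" for p i
  proof
    assume h: "gcon A (p @ [i]) \<noteq> None"
    then have pre: "\<forall>q. prefix q p \<longrightarrow> agr A q"
      unfolding gcon_def by (auto simp: strict_prefix_snoc_iff split: if_splits)
    then have Cp: "agr A p" by simp
    have pre2: "\<forall>q. strict_prefix q p \<longrightarrow> agr A q" using pre prefix_order.less_imp_le by blast
    have gp: "gcon A p = a0 p" using pre2 Cp unfolding gcon_def a0_def by simp
    show "\<exists>f. gcon A p = Some (Fun f) \<and> i < ar f"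
    proof (cases "agr A (p @ [i])")
      case True
      then have "a0 (p @ [i]) \<noteq> None" using h pre unfolding gcon_def a0_def
        by (auto simp: strict_prefix_snoc_iff split: if_splits)
      then show ?thesis using gp pt_child[of ar a0] pt a0 by auto
    next
      case False
      then obtain a b where ab: "a \<in> A" "b \<in> A" "a (p @ [i]) \<noteq> b (p @ [i])" unfolding agr_def by blast
      then obtain c where c: "c \<in> A" "c (p @ [i]) \<noteq> None" by (metis option.exhaust)
      then obtain f where "c p = Some (Fun f)" "i < ar f" using pt_child[of ar c] pt by auto
      moreover have "c p = a0 p" using Cp c a0 unfolding agr_def by blast
      ultimately show ?thesis using gp by auto
    qed
  next
    assume "\<exists>f. gcon A p = Some (Fun f) \<and> i < ar f"
    then obtain f where f: "gcon A p = Some (Fun f)" "i < ar f" by blast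
    then have pre2: "\<forall>q. strict_prefix q p \<longrightarrow> agr A q" and Cp: "agr A p" and gp: "a0 p = Some (Fun f)"
      unfolding gcon_def a0_def by (auto split: if_splits)
    have pre: "\<forall>q. strict_prefix q (p @ [i]) \<longrightarrow> agr A q"
      using pre2 Cp by (auto simp: strict_prefix_snoc_iff prefix_order.le_less)
    have "a0 (p @ [i]) \<noteq> None" using gp f pt_child[of ar a0] pt a0 by auto
    then show "gcon A (p @ [i]) \<noteq> None" using pre unfolding gcon_def a0_def by auto
  qed
  show ?thesis unfolding is_pterm_def using root child by blast
qed

lemma gcon_glb:
  assumes ne: "A \<noteq> {}" and pt: "\<forall>a\<in>A. is_pterm ar a"
  shows "is_glb ar A (gcon A)"
proof -
  define a0 where "a0 = (SOME a. a \<in> A)"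
  have a0: "a0 \<in> A" using ne unfolding a0_def by (simp add: some_in_eq)
  have gpt: "is_pterm ar (gcon A)" using gcon_pterm ne pt by blast
  have lower: "le_bot (gcon A) a" if a: "a \<in> A" for a
  proof -
    have 1: "gcon A p = Some Bot \<or> gcon A p = a p" if "gcon A p \<noteq> None" for p
      using that a a0 unfolding gcon_def a0_def[symmetric] agr_def by (auto split: if_splits)
    have 2: "a p \<noteq> None" if gb: "gcon A p = Some Bot" for p
    proof (cases p rule: rev_cases)
      case Nil
      then show ?thesis using pt_root pt a by blast
    next
      case (snoc p' i)
      from gb have pre: "\<forall>q. strict_prefix q p \<longrightarrow> agr A q" and nC: "\<not> agr A p \<or> a0 p = Some Bot"
        unfolding gcon_def a0_def[symmetric] by (auto split: if_splits)
      have Cp': "agr A p'" using pre snoc by (simp add: strict_prefix_snoc_iff)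
      show ?thesis
      proof (cases "agr A p")
        case True
        then have "a p = a0 p" using a a0 unfolding agr_def by blast
        then show ?thesis using nC True by simp
      next
        case False
        then obtain b c where bc: "b \<in> A" "c \<in> A" "b p \<noteq> c p" unfolding agr_def by blast
        then obtain d where d: "d \<in> A" "d p \<noteq> None" by (metis option.exhaust)
        then obtain f where "d p' = Some (Fun f)" "i < ar f" using pt_child[of ar d] pt snoc by auto
        moreover have "a p' = d p'" using Cp' a d unfolding agr_def by blast
        ultimately show ?thesis using pt_child[of ar a] pt a snoc by auto
      qed
    qed
    show ?thesis using le_bot_iff[OF gpt] pt a 1 2 by blast
  qed
  have greatest: "le_bot h (gcon A)" if h: "is_pterm ar h" "\<forall>a\<in>A. le_bot h a" for h
  proof -
    have hle: "\<forall>a\<in>A. (\<forall>p. h p \<noteq> None \<longrightarrow> h p = Some Bot \<or> h p = a p) \<and> (\<forall>p. h p = Some Bot \<longrightarrow> a p \<noteq> None)"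
      using h le_bot_iff pt by blast
    have pre: "\<forall>q. strict_prefix q p \<longrightarrow> agr A q" if hp: "h p \<noteq> None" for p
    proof (intro allI impI)
      fix q assume "strict_prefix q p"
      then obtain f where hf: "h q = Some (Fun f)" using pt_strict_prefix[OF h(1) hp] by blast
      have "\<forall>a\<in>A. a q = h q"
      proof
        fix a assume "a \<in> A"
        then have "h q = Some Bot \<or> h q = a q" using hle hf by blast
        then show "a q = h q" using hf by auto
      qed
      then show "agr A q" unfolding agr_def by metis
    qed
    have 1: "h p = Some Bot \<or> h p = gcon A p" if "h p \<noteq> None" for p
    proof (cases "h p = Some Bot")
      case False
      have "\<forall>a\<in>A. a p = h p"
      proof
        fix a assume "a \<in> A"
        then have "h p = Some Bot \<or> h p = a p" using hle that by blast
        then show "a p = h p" using False by auto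
      qed
      then have "agr A p" "a0 p = h p" using a0 unfolding agr_def by (metis, blast)
      then show ?thesis using pre[OF that] unfolding gcon_def a0_def by simp
    qed simp
    have 2: "gcon A p \<noteq> None" if hb: "h p = Some Bot" for p
    proof -
      have pp: "\<forall>q. strict_prefix q p \<longrightarrow> agr A q" using pre[of p] hb by simp
      have "a0 p \<noteq> None" using hle a0 hb by blast
      then show ?thesis using pp unfolding gcon_def a0_def[symmetric] by simp
    qed
    show ?thesis using le_bot_iff[OF h(1) gpt] 1 2 by blast
  qed
  show ?thesis unfolding is_glb_def using gpt lower greatest by blast
qed


definition lcon :: "('f, 'v) trm set \<Rightarrow> ('f, 'v) trm" where
  "lcon C = (\<lambda>p. if \<exists>c\<in>C. c p \<noteq> None \<and> c p \<noteq> Some Bot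
      then (SOME c. c \<in> C \<and> c p \<noteq> None \<and> c p \<noteq> Some Bot) p
      else if \<exists>c\<in>C. c p = Some Bot then Some Bot else None)"

lemma le_bot_good:
  assumes "is_pterm ar s" "is_pterm ar t" "le_bot s t" "s p \<noteq> None" "s p \<noteq> Some Bot"
  shows "t p = s p"
proof -
  have "\<forall>p. s p \<noteq> None \<longrightarrow> s p = Some Bot \<or> s p = t p" using assms(3) le_bot_iff[OF assms(1,2)] by blast
  then show ?thesis using assms(4,5) by force
qed

lemma le_bot_bot:
  assumes "is_pterm ar s" "is_pterm ar t" "le_bot s t" "s p = Some Bot"
  shows "t p \<noteq> None"
  using assms(3,4) le_bot_iff[OF assms(1,2)] by blast

lemma lcon_good:
  assumes pt: "\<forall>c\<in>C. is_pterm ar c" and ch: "\<forall>c\<in>C. \<forall>c'\<in>C. le_bot c c' \<or> le_bot c' c"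
    and c: "c \<in> C" "c p \<noteq> None" "c p \<noteq> Some Bot"
  shows "lcon C p = c p"
proof -
  define d where "d = (SOME c. c \<in> C \<and> c p \<noteq> None \<and> c p \<noteq> Some Bot)"
  have d: "d \<in> C" "d p \<noteq> None" "d p \<noteq> Some Bot" using someI[of "\<lambda>c. c \<in> C \<and> c p \<noteq> None \<and> c p \<noteq> Some Bot", OF conjI[OF c(1) conjI[OF c(2-3)]]]
    unfolding d_def by auto
  have "lcon C p = d p" using c unfolding lcon_def d_def by auto
  moreover have "d p = c p"
  proof -
    have "le_bot c d \<or> le_bot d c" using ch c(1) d(1) by blast
    then show ?thesis
    proof
      assume "le_bot c d" then show ?thesis using le_bot_good[of ar c d p] pt c d by simp
    next
      assume "le_bot d c" then show ?thesis using le_bot_good[of ar d c p] pt c d by simp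
    qed
  qed
  ultimately show ?thesis by simp
qed

lemma lcon_cases:
  assumes pt: "\<forall>c\<in>C. is_pterm ar c" and ch: "\<forall>c\<in>C. \<forall>c'\<in>C. le_bot c c' \<or> le_bot c' c"
  obtains (good) c where "c \<in> C" "c p \<noteq> None" "c p \<noteq> Some Bot" "lcon C p = c p"
    | (bot) "\<forall>c\<in>C. c p = None \<or> c p = Some Bot" "\<exists>c\<in>C. c p = Some Bot" "lcon C p = Some Bot"
    | (none) "\<forall>c\<in>C. c p = None" "lcon C p = None"
proof (cases "\<exists>c\<in>C. c p \<noteq> None \<and> c p \<noteq> Some Bot")
  case True
  then obtain c where c: "c \<in> C" "c p \<noteq> None" "c p \<noteq> Some Bot" by blast
  then have "lcon C p = c p" using lcon_good[OF pt ch c] by blast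
  then show ?thesis using c good by blast
next
  case False
  then have F: "\<forall>c\<in>C. c p = None \<or> c p = Some Bot" by blast
  show ?thesis
  proof (cases "\<exists>c\<in>C. c p = Some Bot")
    case True
    have "lcon C p = Some Bot" unfolding lcon_def by (simp only: if_not_P[OF False] if_P[OF True])
    then show ?thesis using F True bot by blast
  next
    case F2: False
    have "lcon C p = None" unfolding lcon_def by (simp only: if_not_P[OF False] if_not_P[OF F2])
    moreover have "\<forall>c\<in>C. c p = None" using F F2 by blast
    ultimately show ?thesis using none by blast
  qed
qed

lemma lcon_nonNone:
  assumes pt: "\<forall>c\<in>C. is_pterm ar c" and ch: "\<forall>c\<in>C. \<forall>c'\<in>C. le_bot c c' \<or> le_bot c' c"
    and c: "c \<in> C" "c p \<noteq> None"
  shows "lcon C p \<noteq> None"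
  by (rule lcon_cases[OF pt ch, of p]) (use c in auto)

lemma lcon_Fun:
  assumes pt: "\<forall>c\<in>C. is_pterm ar c" and ch: "\<forall>c\<in>C. \<forall>c'\<in>C. le_bot c c' \<or> le_bot c' c"
    and l: "lcon C p = Some (Fun f)"
  shows "\<exists>c\<in>C. c p = Some (Fun f)"
  by (rule lcon_cases[OF pt ch, of p]) (use l in auto)

lemma lcon_Bot:
  assumes pt: "\<forall>c\<in>C. is_pterm ar c" and ch: "\<forall>c\<in>C. \<forall>c'\<in>C. le_bot c c' \<or> le_bot c' c"
    and l: "lcon C p = Some Bot"
  shows "\<exists>c\<in>C. c p = Some Bot"
  by (rule lcon_cases[OF pt ch, of p]) (use l in auto)

lemma lcon_lub:
  assumes ne: "C \<noteq> {}" and pt: "\<forall>c\<in>C. is_pterm ar c" and ch: "\<forall>c\<in>C. \<forall>c'\<in>C. le_bot c c' \<or> le_bot c' c"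
  shows "is_lub ar C (lcon C)"
proof -
  obtain c0 where c0: "c0 \<in> C" using ne by blast
  have root: "lcon C [] \<noteq> None"
    using lcon_nonNone[OF pt ch c0] pt c0 pt_root by blast
  have child: "lcon C (p @ [i]) \<noteq> None \<longleftrightarrow> (\<exists>f. lcon C p = Some (Fun f) \<and> i < ar f)" for p i
  proof
    assume ln: "lcon C (p @ [i]) \<noteq> None"
    have "\<exists>c\<in>C. c (p @ [i]) \<noteq> None"
      by (rule lcon_cases[OF pt ch, of "p @ [i]"]) (use ln in auto)
    then obtain c where c: "c \<in> C" "c (p @ [i]) \<noteq> None" by blast
    then obtain f where f: "c p = Some (Fun f)" "i < ar f" using pt pt_child[of ar c p i] by blast
    then have "lcon C p = c p" using lcon_good[OF pt ch c(1)] by simp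
    then show "\<exists>f. lcon C p = Some (Fun f) \<and> i < ar f" using f by simp
  next
    assume "\<exists>f. lcon C p = Some (Fun f) \<and> i < ar f"
    then obtain f where f: "lcon C p = Some (Fun f)" "i < ar f" by blast
    then obtain c where c: "c \<in> C" "c p = Some (Fun f)" using lcon_Fun[OF pt ch] by blast
    then have "c (p @ [i]) \<noteq> None" using pt pt_child[of ar c p i] f by blast
    then show "lcon C (p @ [i]) \<noteq> None" using lcon_nonNone[OF pt ch c(1)] by blast
  qed
  have lpt: "is_pterm ar (lcon C)" unfolding is_pterm_def using root child by blast
  have upper: "le_bot c (lcon C)" if c: "c \<in> C" for c
  proof -
    have "(\<forall>p. c p \<noteq> None \<longrightarrow> c p = Some Bot \<or> c p = lcon C p) \<and> (\<forall>p. c p = Some Bot \<longrightarrow> lcon C p \<noteq> None)"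
    proof (intro conjI allI impI)
      fix p assume cp: "c p \<noteq> None"
      show "c p = Some Bot \<or> c p = lcon C p"
      proof (cases "c p = Some Bot")
        case False
        then show ?thesis using lcon_good[OF pt ch c cp False] by simp
      qed simp
    next
      fix p assume "c p = Some Bot"
      then show "lcon C p \<noteq> None" using lcon_nonNone[OF pt ch c] by simp
    qed
    then show ?thesis using le_bot_iff[of ar c "lcon C"] pt c lpt by blast
  qed
  have least: "le_bot (lcon C) h" if h: "is_pterm ar h" "\<forall>c\<in>C. le_bot c h" for h
  proof -
    have "(\<forall>p. lcon C p \<noteq> None \<longrightarrow> lcon C p = Some Bot \<or> lcon C p = h p) \<and> (\<forall>p. lcon C p = Some Bot \<longrightarrow> h p \<noteq> None)"
    proof (intro conjI allI impI)
      fix p assume "lcon C p \<noteq> None"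
      show "lcon C p = Some Bot \<or> lcon C p = h p"
      proof (rule lcon_cases[OF pt ch, of p])
        fix c assume "c \<in> C" "c p \<noteq> None" "c p \<noteq> Some Bot" "lcon C p = c p"
        then show ?thesis using h pt le_bot_good[of ar c h p] by simp
      qed (use \<open>lcon C p \<noteq> None\<close> in simp_all)
    next
      fix p assume "lcon C p = Some Bot"
      then obtain c where "c \<in> C" "c p = Some Bot" using lcon_Bot[OF pt ch] by blast
      then show "h p \<noteq> None" using h pt le_bot_bot[of ar c h p] by blast
    qed
    then show ?thesis using le_bot_iff[of ar "lcon C" h] h lpt by blast
  qed
  show ?thesis unfolding is_lub_def using lpt upper least by blast
qed


definition agree :: "nat \<Rightarrow> ('f, 'v) trm \<Rightarrow> ('f, 'v) trm \<Rightarrow> bool" where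
  "agree d s t \<longleftrightarrow> (\<forall>p. length p \<le> d \<longrightarrow> s p = t p)"

lemma tdist_agree:
  assumes "agree d s t" shows "tdist s t \<le> inverse (2 ^ Suc d)"
proof (cases "s = t")
  case True then show ?thesis by (simp add: tdist_def)
next
  case False
  then obtain p where p: "s p \<noteq> t p" by blast
  define k where "k = (LEAST k. \<exists>p. length p = k \<and> s p \<noteq> t p)"
  have "\<exists>p. length p = k \<and> s p \<noteq> t p" unfolding k_def
    by (rule LeastI[of _ "length p"]) (use p in blast)
  then obtain q where q: "length q = k" "s q \<noteq> t q" by blast
  have "\<not> k \<le> d" using assms q unfolding agree_def by auto
  then have "Suc d \<le> k" by simp
  then have "(2::real) ^ Suc d \<le> 2 ^ k" by (rule power_increasing) simp
  then have "inverse ((2::real) ^ k) \<le> inverse (2 ^ Suc d)" by (rule le_imp_inverse_le) simp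
  then show ?thesis using False unfolding tdist_def k_def by simp
qed

lemma agree_tdist:
  assumes "tdist s t < inverse (2 ^ d)" shows "agree d s t"
proof (cases "s = t")
  case True then show ?thesis by (simp add: agree_def)
next
  case False
  define k where "k = (LEAST k. \<exists>p. length p = k \<and> s p \<noteq> t p)"
  have "inverse ((2::real) ^ k) < inverse (2 ^ d)" using assms False unfolding tdist_def k_def by simp
  then have "(2::real) ^ d < 2 ^ k" by (simp add: inverse_less_iff_less)
  then have dk: "d < k" by (simp add: power_strict_increasing_iff)
  show ?thesis unfolding agree_def
  proof (intro allI impI)
    fix p :: "nat list" assume "length p \<le> d"
    show "s p = t p"
    proof (rule ccontr)
      assume "s p \<noteq> t p"
      then have "k \<le> length p" unfolding k_def by (intro Least_le) blast
      then show False using dk \<open>length p \<le> d\<close> by simp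
    qed
  qed
qed

lemma exists_inv_pow: "(e::real) > 0 \<Longrightarrow> \<exists>d. inverse (2 ^ d) < e"
proof -
  assume "e > 0"
  then obtain n where "(1/2::real) ^ n < e" using real_arch_pow_inv[of e "1/2"] by auto
  moreover have "(1/2::real) ^ n = inverse (2 ^ n)" by (simp add: power_one_over inverse_eq_divide)
  ultimately show ?thesis by auto
qed

definition trunc :: "nat \<Rightarrow> ('f, 'v) trm \<Rightarrow> ('f, 'v) trm" where
  "trunc d t = (\<lambda>p. if length p \<le> d then t p else if length p = Suc d \<and> t p \<noteq> None then Some Bot else None)"

lemma trunc_pterm:
  assumes t: "is_pterm ar t" shows "is_pterm ar (trunc d t)"
  unfolding is_pterm_def
proof (intro conjI allI)
  show "trunc d t [] \<noteq> None" using pt_root[OF t] unfolding trunc_def by simp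
next
  fix p i
  show "(trunc d t (p @ [i]) \<noteq> None) = (\<exists>f. trunc d t p = Some (Fun f) \<and> i < ar f)"
  proof (cases "length p < d")
    case True
    then show ?thesis using pt_child[OF t, of p i] unfolding trunc_def by simp
  next
    case False
    show ?thesis
    proof (cases "length p = d")
      case True
      then show ?thesis using pt_child[OF t, of p i] unfolding trunc_def by simp
    next
      case False2: False
      then show ?thesis using False unfolding trunc_def by auto
    qed
  qed
qed

lemma trunc_le:
  assumes t: "is_total ar t" and s: "is_pterm ar s" and ag: "agree d s t"
  shows "le_bot (trunc d t) s"
proof -
  have tp: "is_pterm ar t" using t unfolding is_total_def by blast
  have nb: "t p \<noteq> Some Bot" for p using t unfolding is_total_def by blast
  have 1: "trunc d t p = Some Bot \<or> trunc d t p = s p" if "trunc d t p \<noteq> None" for p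
    using that ag unfolding trunc_def agree_def by (auto split: if_splits)
  have 2: "s p \<noteq> None" if tb: "trunc d t p = Some Bot" for p
  proof -
    have lp: "length p = Suc d" "t p \<noteq> None" using tb nb[of p] unfolding trunc_def by (auto split: if_splits)
    then obtain p' i where pi: "p = p' @ [i]" by (cases p rule: rev_cases) auto
    then have "length p' \<le> d" using lp by simp
    then have "s p' = t p'" using ag unfolding agree_def by blast
    then show ?thesis using pt_child[OF s, of p' i] pt_child[OF tp, of p' i] lp(2) pi by simp
  qed
  show ?thesis using le_bot_iff[OF trunc_pterm[OF tp] s] 1 2 by blast
qed

lemma agree_from_poss:
  assumes s: "is_pterm ar s" and t: "is_pterm ar t"
    and h: "\<forall>p. length p \<le> d \<and> t p \<noteq> None \<longrightarrow> s p = t p"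
  shows "agree d s t"
proof -
  have "length p \<le> d \<longrightarrow> s p = t p" for p
  proof (induction p rule: rev_induct)
    case Nil
    then show ?case using h pt_root[OF t] by auto
  next
    case (snoc i p)
    show ?case
    proof
      assume l: "length (p @ [i]) \<le> d"
      show "s (p @ [i]) = t (p @ [i])"
      proof (cases "t (p @ [i]) = None")
        case True
        have "s p = t p" using snoc.IH l by simp
        then show ?thesis using True pt_child[OF s, of p i] pt_child[OF t, of p i] by auto
      next
        case False
        then show ?thesis using h l by blast
      qed
    qed
  qed
  then show ?thesis unfolding agree_def by blast
qed

lemma finite_depth:
  assumes t: "is_pterm ar t" shows "finite {p. length p \<le> d \<and> t p \<noteq> None}"
proof (induction d)
  case 0
  have "{p. length p \<le> 0 \<and> t p \<noteq> None} \<subseteq> {[]}" by auto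
  then show ?case by (rule finite_subset) simp
next
  case (Suc d)
  define S where "S = {p. length p \<le> d \<and> t p \<noteq> None}"
  define K where "K p = (case t p of Some (Fun f) \<Rightarrow> ar f | _ \<Rightarrow> 0)" for p
  have "{p. length p \<le> Suc d \<and> t p \<noteq> None} \<subseteq> S \<union> (\<Union>p\<in>S. (\<lambda>i. p @ [i]) ` {i. i < K p})"
  proof
    fix q assume q: "q \<in> {p. length p \<le> Suc d \<and> t p \<noteq> None}"
    show "q \<in> S \<union> (\<Union>p\<in>S. (\<lambda>i. p @ [i]) ` {i. i < K p})"
    proof (cases "length q \<le> d")
      case True then show ?thesis using q unfolding S_def by simp
    next
      case False
      then obtain p i where pi: "q = p @ [i]" by (cases q rule: rev_cases) auto
      then obtain f where f: "t p = Some (Fun f)" "i < ar f" using pt_child[OF t, of p i] q by auto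
      have "p \<in> S" using f q pi unfolding S_def by simp
      moreover have "i < K p" using f unfolding K_def by simp
      ultimately show ?thesis using pi by blast
    qed
  qed
  moreover have "finite (S \<union> (\<Union>p\<in>S. (\<lambda>i. p @ [i]) ` {i. i < K p}))"
    using Suc.IH unfolding S_def by simp
  ultimately show ?case by (rule finite_subset)
qed


lemma core:
  fixes I :: "'o::wellorder set" and ts :: "'o \<Rightarrow> ('f, 'v) trm" and t :: "('f, 'v) trm"
  assumes ne: "I \<noteq> {}" and tot: "\<forall>i\<in>I. is_total ar (ts i)" and t: "is_total ar t"
  shows "pliminf ar I ts = t \<longleftrightarrow> mlim I ts t"
proof -
  have tpt: "is_pterm ar t" using t unfolding is_total_def by blast
  have tnb: "t p \<noteq> Some Bot" for p using t unfolding is_total_def by blast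
  have tspt: "is_pterm ar (ts i)" if "i \<in> I" for i using tot that unfolding is_total_def by blast
  define G where "G b = glb ar (ts ` {i \<in> I. b \<le> i})" for b
  have Gglb: "is_glb ar (ts ` {i \<in> I. b \<le> i}) (G b)" if b: "b \<in> I" for b
  proof -
    have ne2: "ts ` {i \<in> I. b \<le> i} \<noteq> {}" using b by blast
    have pt2: "\<forall>a\<in>ts ` {i \<in> I. b \<le> i}. is_pterm ar a" using tspt by blast
    have "is_glb ar (ts ` {i \<in> I. b \<le> i}) (gcon (ts ` {i \<in> I. b \<le> i}))" using gcon_glb[OF ne2 pt2] .
    moreover then have "G b = gcon (ts ` {i \<in> I. b \<le> i})" unfolding G_def by (rule glb_eq)
    ultimately show ?thesis by simp
  qed
  have Gpt: "is_pterm ar (G b)" if "b \<in> I" for b using Gglb[OF that] unfolding is_glb_def by blast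
  have Gle: "le_bot (G b) (ts i)" if "b \<in> I" "i \<in> I" "b \<le> i" for b i
    using Gglb[OF that(1)] that unfolding is_glb_def by blast
  have Gmax: "le_bot h (G b)" if "b \<in> I" "is_pterm ar h" "\<forall>i\<in>I. b \<le> i \<longrightarrow> le_bot h (ts i)" for b h
    using Gglb[OF that(1)] that unfolding is_glb_def by blast
  have Gmono: "le_bot (G b) (G b')" if "b \<in> I" "b' \<in> I" "b \<le> b'" for b b'
    using Gmax[OF that(2) Gpt[OF that(1)]] Gle[OF that(1)] that(3) by auto
  define Gs where "Gs = {G b | b. b \<in> I}"
  have pl: "pliminf ar I ts = lub ar Gs" unfolding pliminf_def Gs_def G_def by simp
  have Gsne: "Gs \<noteq> {}" using ne unfolding Gs_def by blast
  have Gspt: "\<forall>c\<in>Gs. is_pterm ar c" unfolding Gs_def using Gpt by blast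
  have Gsch: "\<forall>c\<in>Gs. \<forall>c'\<in>Gs. le_bot c c' \<or> le_bot c' c"
  proof (intro ballI)
    fix c c' assume "c \<in> Gs" "c' \<in> Gs"
    then obtain b b' where bb: "b \<in> I" "b' \<in> I" "c = G b" "c' = G b'" unfolding Gs_def by blast
    show "le_bot c c' \<or> le_bot c' c"
    proof (cases "b \<le> b'")
      case True then show ?thesis using Gmono bb by blast
    next
      case False then have "b' \<le> b" by simp
      then show ?thesis using Gmono bb by blast
    qed
  qed
  show ?thesis
  proof
    assume "pliminf ar I ts = t"
    then have lt: "lcon Gs = t" using pl lub_eq[OF lcon_lub[OF Gsne Gspt Gsch]] by simp
    have ev: "\<exists>b\<in>I. \<forall>i\<in>I. b \<le> i \<longrightarrow> agree d (ts i) t" for d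
    proof -
      define Pd where "Pd = {p. length p \<le> d \<and> t p \<noteq> None}"
      have fin: "finite Pd" unfolding Pd_def by (rule finite_depth[OF tpt])
      have "[] \<in> Pd" using pt_root[OF tpt] unfolding Pd_def by simp
      then have Pdne: "Pd \<noteq> {}" by blast
      have "\<exists>b. b \<in> I \<and> G b p = t p" if p: "p \<in> Pd" for p
      proof (rule lcon_cases[OF Gspt Gsch, of p])
        fix c assume "c \<in> Gs" "c p \<noteq> None" "c p \<noteq> Some Bot" "lcon Gs p = c p"
        then show ?thesis using lt unfolding Gs_def by auto
      next
        assume "lcon Gs p = Some Bot"
        then show ?thesis using lt tnb by simp
      next
        assume "lcon Gs p = None"
        then show ?thesis using lt p unfolding Pd_def by simp
      qed
      then have "\<forall>p\<in>Pd. \<exists>b. b \<in> I \<and> G b p = t p" by blast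
      from bchoice[OF this] obtain B where B: "\<forall>p\<in>Pd. B p \<in> I \<and> G (B p) p = t p" by blast
      define bs where "bs = Max (B ` Pd)"
      have "bs \<in> B ` Pd" unfolding bs_def using Max_in[of "B ` Pd"] fin Pdne by blast
      then have bsI: "bs \<in> I" using B by blast
      have Gbs: "G bs p = t p" if p: "p \<in> Pd" for p
      proof -
        have "B p \<le> bs" unfolding bs_def using fin p by simp
        then have "le_bot (G (B p)) (G bs)" using Gmono B p bsI by blast
        moreover have "G (B p) p \<noteq> None" "G (B p) p \<noteq> Some Bot" using B p tnb unfolding Pd_def by auto
        ultimately show ?thesis using le_bot_good[of ar "G (B p)" "G bs" p] Gpt B p bsI by auto
      qed
      have "agree d (ts i) t" if i: "i \<in> I" "bs \<le> i" for i
      proof (rule agree_from_poss[OF tspt[OF i(1)] tpt], intro allI impI)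
        fix p assume p: "length p \<le> d \<and> t p \<noteq> None"
        then have pP: "p \<in> Pd" unfolding Pd_def by simp
        have "le_bot (G bs) (ts i)" using Gle bsI i by blast
        moreover have "G bs p \<noteq> None" "G bs p \<noteq> Some Bot" using Gbs[OF pP] p tnb by auto
        ultimately show "ts i p = t p" using le_bot_good[of ar "G bs" "ts i" p] Gpt bsI tspt i Gbs[OF pP] by auto
      qed
      then show ?thesis using bsI by blast
    qed
    show "mlim I ts t" unfolding mlim_def
    proof (intro allI impI)
      fix e :: real assume e: "e > 0"
      obtain d where d: "inverse (2 ^ d) < e" using exists_inv_pow[OF e] by blast
      obtain b where b: "b \<in> I" "\<forall>i\<in>I. b \<le> i \<longrightarrow> agree d (ts i) t" using ev by blast
      have "inverse ((2::real) ^ Suc d) \<le> inverse (2 ^ d)" by (simp add: le_imp_inverse_le)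
      have "\<forall>i\<in>I. b \<le> i \<longrightarrow> tdist (ts i) t < e"
      proof (intro ballI impI)
        fix i assume "i \<in> I" "b \<le> i"
        then have "tdist (ts i) t \<le> inverse (2 ^ Suc d)" using b tdist_agree by blast
        then show "tdist (ts i) t < e" using \<open>inverse ((2::real) ^ Suc d) \<le> inverse (2 ^ d)\<close> d by linarith
      qed
      then show "\<exists>b\<in>I. \<forall>i\<in>I. b \<le> i \<longrightarrow> tdist (ts i) t < e" using b by blast
    qed
  next
    assume m: "mlim I ts t"
    have ev: "\<exists>b\<in>I. \<forall>i\<in>I. b \<le> i \<longrightarrow> agree d (ts i) t" for d
    proof -
      have "(0::real) < inverse (2 ^ d)" by simp
      then obtain b where "b \<in> I" "\<forall>i\<in>I. b \<le> i \<longrightarrow> tdist (ts i) t < inverse (2 ^ d)"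
        using m unfolding mlim_def by blast
      then show ?thesis using agree_tdist by blast
    qed
    have upper: "le_bot (G b) t" if b: "b \<in> I" for b
    proof -
      have "(\<forall>p. G b p \<noteq> None \<longrightarrow> G b p = Some Bot \<or> G b p = t p) \<and> (\<forall>p. G b p = Some Bot \<longrightarrow> t p \<noteq> None)"
      proof (intro conjI allI impI)
        fix p assume gp: "G b p \<noteq> None"
        obtain b0 where b0: "b0 \<in> I" "\<forall>i\<in>I. b0 \<le> i \<longrightarrow> agree (length p) (ts i) t" using ev by blast
        define b' where "b' = max b b0"
        have b': "b' \<in> I" "b \<le> b'" "b0 \<le> b'" unfolding b'_def using b b0 by (auto simp: max_def)
        have ag: "ts b' p = t p" using b0 b' unfolding agree_def by blast
        show "G b p = Some Bot \<or> G b p = t p"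
        proof (cases "G b p = Some Bot")
          case False
          then have "ts b' p = G b p" using le_bot_good[of ar "G b" "ts b'" p] Gpt[OF b] tspt[OF b'(1)] Gle[OF b b'(1,2)] gp by blast
          then show ?thesis using ag by simp
        qed simp
      next
        fix p assume gp: "G b p = Some Bot"
        obtain b0 where b0: "b0 \<in> I" "\<forall>i\<in>I. b0 \<le> i \<longrightarrow> agree (length p) (ts i) t" using ev by blast
        define b' where "b' = max b b0"
        have b': "b' \<in> I" "b \<le> b'" "b0 \<le> b'" unfolding b'_def using b b0 by (auto simp: max_def)
        have ag: "ts b' p = t p" using b0 b' unfolding agree_def by blast
        have "ts b' p \<noteq> None" using le_bot_bot[of ar "G b" "ts b'" p] Gpt[OF b] tspt[OF b'(1)] Gle[OF b b'(1,2)] gp by blast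
        then show "t p \<noteq> None" using ag by simp
      qed
      then show ?thesis using le_bot_iff[OF Gpt[OF b] tpt] by blast
    qed
    have least: "le_bot t h" if h: "is_pterm ar h" "\<forall>g\<in>Gs. le_bot g h" for h
    proof -
      have "(\<forall>p. t p \<noteq> None \<longrightarrow> t p = Some Bot \<or> t p = h p) \<and> (\<forall>p. t p = Some Bot \<longrightarrow> h p \<noteq> None)"
      proof (intro conjI allI impI)
        fix p assume tp: "t p \<noteq> None"
        obtain b0 where b0: "b0 \<in> I" "\<forall>i\<in>I. b0 \<le> i \<longrightarrow> agree (length p) (ts i) t" using ev by blast
        have "le_bot (trunc (length p) t) (ts i)" if "i \<in> I" "b0 \<le> i" for i
          using trunc_le[OF t tspt[OF that(1)]] b0 that by blast
        then have tg: "le_bot (trunc (length p) t) (G b0)" using Gmax[OF b0(1) trunc_pterm[OF tpt]] by blast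
        have trp: "trunc (length p) t p = t p" unfolding trunc_def by simp
        have "G b0 p = t p" using le_bot_good[OF trunc_pterm[OF tpt] Gpt[OF b0(1)] tg] trp tp tnb by simp
        moreover have "le_bot (G b0) h" using h b0 unfolding Gs_def by blast
        moreover have "G b0 p \<noteq> None" "G b0 p \<noteq> Some Bot" using calculation(1) tp tnb by auto
        ultimately have "h p = G b0 p" using le_bot_good[OF Gpt[OF b0(1)] h(1)] by blast
        then have "h p = t p" using \<open>G b0 p = t p\<close> by simp
        then show "t p = Some Bot \<or> t p = h p" by simp
      next
        fix p assume "t p = Some Bot" then show "h p \<noteq> None" using tnb by simp
      qed
      then show ?thesis using le_bot_iff[OF tpt h(1)] by blast
    qed
    have "is_lub ar Gs t" unfolding is_lub_def using tpt upper least unfolding Gs_def by blast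
    then show "pliminf ar I ts = t" using pl lub_eq by simp
  qed
qed


lemma subst_cong:
  assumes "\<forall>x\<in>vars l. \<sigma> x = \<tau> x"
  shows "subst_apply \<sigma> l = subst_apply \<tau> l"
proof
  fix p
  show "subst_apply \<sigma> l p = subst_apply \<tau> l p"
  proof (cases "\<exists>q x. prefix q p \<and> l q = Some (Var x)")
    case True
    define qx where "qx = (SOME qx. prefix (fst qx) p \<and> l (fst qx) = Some (Var (snd qx)))"
    have "\<exists>qx. prefix (fst qx) p \<and> l (fst qx) = Some (Var (snd qx))" using True by auto
    then have qxp: "prefix (fst qx) p \<and> l (fst qx) = Some (Var (snd qx))" unfolding qx_def by (rule someI_ex)
    then have "snd qx \<in> vars l" unfolding vars_def by blast
    then have eq: "\<sigma> (snd qx) = \<tau> (snd qx)" using assms by blast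
    have "subst_apply \<sigma> l p = (case qx of (q, x) \<Rightarrow> \<sigma> x (drop (length q) p))"
      unfolding subst_apply_def qx_def by (simp only: if_P[OF True])
    moreover have "subst_apply \<tau> l p = (case qx of (q, x) \<Rightarrow> \<tau> x (drop (length q) p))"
      unfolding subst_apply_def qx_def by (simp only: if_P[OF True])
    ultimately show ?thesis using eq by (cases qx) simp
  next
    case False
    show ?thesis unfolding subst_apply_def by (simp only: if_not_P[OF False])
  qed
qed

lemma var_leaf:
  assumes l: "is_pterm ar l" and q: "l q = Some (Var x)" and q': "prefix q' (q @ p)" "l q' = Some (Var x')"
  shows "q' = q \<and> x' = x"
proof -
  have "prefix q (q @ p)" by simp
  then have "prefix q' q \<or> prefix q q'" using q'(1) prefix_same_cases by blast
  moreover have "\<not> strict_prefix q' q"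
  proof
    assume "strict_prefix q' q"
    then obtain f where "l q' = Some (Fun f)" using pt_strict_prefix[OF l] q by fastforce
    then show False using q' by simp
  qed
  moreover have "\<not> strict_prefix q q'"
  proof
    assume "strict_prefix q q'"
    then obtain f where "l q = Some (Fun f)" using pt_strict_prefix[OF l] q' by fastforce
    then show False using q by simp
  qed
  ultimately have "q' = q" by (metis prefix_order.less_le)
  then show ?thesis using q q' by simp
qed

lemma subst_at_var:
  assumes l: "is_pterm ar l" and q: "l q = Some (Var x)"
  shows "subst_apply \<sigma> l (q @ p) = \<sigma> x p"
proof -
  have "prefix q (q @ p)" by simp
  then have ex: "\<exists>q' x'. prefix q' (q @ p) \<and> l q' = Some (Var x')" using q by blast
  define qx where "qx = (SOME qx. prefix (fst qx) (q @ p) \<and> l (fst qx) = Some (Var (snd qx)))"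
  have "\<exists>qx. prefix (fst qx) (q @ p) \<and> l (fst qx) = Some (Var (snd qx))" using ex by auto
  then have qxp: "prefix (fst qx) (q @ p) \<and> l (fst qx) = Some (Var (snd qx))" unfolding qx_def by (rule someI_ex)
  then have "fst qx = q \<and> snd qx = x" using var_leaf[OF l q] by blast
  then have qxe: "qx = (q, x)" by (metis prod.collapse)
  have "subst_apply \<sigma> l (q @ p) = (case qx of (q', x') \<Rightarrow> \<sigma> x' (drop (length q') (q @ p)))"
    unfolding subst_apply_def qx_def by (simp only: if_P[OF ex])
  then show ?thesis using qxe by simp
qed

definition vterm :: "'v \<Rightarrow> ('f, 'v) trm" where
  "vterm x = (\<lambda>p. if p = [] then Some (Var x) else None)"

lemma vterm_total: "is_total ar (vterm x)"
  unfolding is_total_def is_pterm_def vterm_def by simp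

lemma rstep_total:
  assumes R: "is_TRS ar R" and st: "rstep (is_pterm ar) R t \<pi> u"
    and t: "is_total ar t" and u: "is_total ar u"
  shows "rstep (is_total ar) R t \<pi> u"
proof -
  obtain l r \<sigma> where lr: "(l, r) \<in> R" and sig: "\<forall>x. is_pterm ar (\<sigma> x)"
    and sub: "subterm_at t \<pi> = subst_apply \<sigma> l" and ueq: "u = replace_at t \<pi> (subst_apply \<sigma> r)"
    and pos: "\<pi> \<in> poss t"
    using st unfolding rstep_def by blast
  have lt: "is_total ar l" and vr: "vars r \<subseteq> vars l" using R lr unfolding is_TRS_def by auto
  have lpt: "is_pterm ar l" using lt unfolding is_total_def by blast
  define \<tau> where "\<tau> x = (if x \<in> vars l then \<sigma> x else vterm x)" for x
  have e1: "subst_apply \<tau> l = subst_apply \<sigma> l" by (rule subst_cong) (simp add: \<tau>_def)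
  have e2: "subst_apply \<tau> r = subst_apply \<sigma> r" by (rule subst_cong) (use vr in \<open>auto simp: \<tau>_def\<close>)
  have tt: "is_total ar (\<tau> x)" for x
  proof (cases "x \<in> vars l")
    case True
    then obtain q where q: "l q = Some (Var x)" unfolding vars_def by blast
    have "\<sigma> x p \<noteq> Some Bot" for p
    proof
      assume b: "\<sigma> x p = Some Bot"
      have "subst_apply \<sigma> l (q @ p) = Some Bot" using subst_at_var[OF lpt q] b by simp
      moreover have "subterm_at t \<pi> (q @ p) = subst_apply \<sigma> l (q @ p)" using sub by simp
      ultimately have "t (\<pi> @ q @ p) = Some Bot" unfolding subterm_at_def by simp
      then show False using t unfolding is_total_def by blast
    qed
    then show ?thesis using True sig unfolding \<tau>_def is_total_def by simp
  next
    case False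
    then show ?thesis unfolding \<tau>_def using vterm_total by simp
  qed
  have "\<forall>x. is_total ar (\<tau> x)" using tt by blast
  moreover have "subterm_at t \<pi> = subst_apply \<tau> l \<and> u = replace_at t \<pi> (subst_apply \<tau> r)"
    using sub ueq e1 e2 by simp
  ultimately have "\<exists>(l, r)\<in>R. \<exists>\<sigma>. (\<forall>x. is_total ar (\<sigma> x)) \<and>
        subterm_at t \<pi> = subst_apply \<sigma> l \<and> u = replace_at t \<pi> (subst_apply \<sigma> r)"
    using lr by blast
  then show ?thesis unfolding rstep_def using t u pos by blast
qed

lemma total_pterm: "is_total ar x \<Longrightarrow> is_pterm ar x"
  unfolding is_total_def by blast

lemma rstep_mono:
  assumes "rstep (is_total ar) R t \<pi> u" shows "rstep (is_pterm ar) R t \<pi> u"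
  using assms unfolding rstep_def using total_pterm by blast

lemma idx_ne: "idx \<alpha> \<noteq> {}"
  unfolding idx_def is_limit_def by auto

lemma lt_idx: "i < \<alpha> \<Longrightarrow> i \<in> idx \<alpha>"
  unfolding idx_def by auto

theorem theorem4p9:
  fixes ar :: "'f \<Rightarrow> nat"
    and R :: "(('f, 'v) trm \<times> ('f, 'v) trm) set"
    and \<alpha> :: "'o::wellorder"
    and ts :: "'o \<Rightarrow> ('f, 'v) trm"
    and ps :: "'o \<Rightarrow> nat list"
    and s t :: "('f, 'v) trm"
  assumes "is_TRS ar R"
  shows "((weakly_p_continuous ar R \<alpha> ts ps \<and> total_red ar \<alpha> ts \<and> ts ozero = s)
            \<longleftrightarrow> (weakly_m_continuous ar R \<alpha> ts ps \<and> ts ozero = s))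
       \<and> ((weakly_p_converges ar R \<alpha> ts ps t \<and> total_red ar \<alpha> ts \<and> is_total ar t \<and> ts ozero = s)
            \<longleftrightarrow> (weakly_m_converges ar R \<alpha> ts ps t \<and> ts ozero = s))"
proof -
  have lim: "pliminf ar {i. i < lam} ts = ts lam \<longleftrightarrow> mlim {i. i < lam} ts (ts lam)"
    if tr: "total_red ar \<alpha> ts" and lam: "lam < \<alpha>" "is_limit lam" for lam
  proof (rule core)
    show "{i. i < lam} \<noteq> {}" using lam(2) unfolding is_limit_def by auto
    show "\<forall>i\<in>{i. i < lam}. is_total ar (ts i)"
    proof
      fix i assume "i \<in> {i. i < lam}"
      then have "i < \<alpha>" using lam(1) by simp
      then show "is_total ar (ts i)" using tr lt_idx unfolding total_red_def by blast
    qed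
    show "is_total ar (ts lam)" using tr lam(1) lt_idx unfolding total_red_def by auto
  qed
  have I: "(weakly_p_continuous ar R \<alpha> ts ps \<and> total_red ar \<alpha> ts) \<longleftrightarrow> weakly_m_continuous ar R \<alpha> ts ps"
  proof
    assume h: "weakly_p_continuous ar R \<alpha> ts ps \<and> total_red ar \<alpha> ts"
    have red: "is_reduction (is_total ar) R \<alpha> ts ps"
      unfolding is_reduction_def
    proof (intro conjI allI impI ballI)
      fix i assume "i \<in> idx \<alpha>" then show "is_total ar (ts i)" using h unfolding total_red_def by blast
    next
      fix i assume i: "i < \<alpha>"
      have "rstep (is_pterm ar) R (ts i) (ps i) (ts (osuc i))"
        using h i unfolding weakly_p_continuous_def is_reduction_def by blast
      moreover have "is_total ar (ts i)" using h i lt_idx unfolding total_red_def by blast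
      moreover have "is_total ar (ts (osuc i))"
      proof -
        have "is_pterm ar (ts i) \<and> is_pterm ar (ts (osuc i))" using calculation(1) unfolding rstep_def by blast
        have "osuc i \<in> idx \<alpha>"
        proof (cases "is_limit \<alpha>")
          case True
          then obtain k where k: "i < k" "k < \<alpha>" using i unfolding is_limit_def by blast
          then have "osuc i \<le> k" unfolding osuc_def using Least_le[of "\<lambda>x. i < x" k] by blast
          then have "osuc i < \<alpha>" using k(2) by simp
          then show ?thesis using True unfolding idx_def by simp
        next
          case False
          have "osuc i \<le> \<alpha>" unfolding osuc_def using Least_le[of "\<lambda>x. i < x" \<alpha>] i by blast
          then show ?thesis using False unfolding idx_def by simp
        qed
        then show ?thesis using h unfolding total_red_def by blast
      qed
      ultimately show "rstep (is_total ar) R (ts i) (ps i) (ts (osuc i))"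
        using rstep_total[OF assms] by blast
    qed
    show "weakly_m_continuous ar R \<alpha> ts ps"
      unfolding weakly_m_continuous_def using red h lim unfolding weakly_p_continuous_def by blast
  next
    assume h: "weakly_m_continuous ar R \<alpha> ts ps"
    have tr: "total_red ar \<alpha> ts" using h unfolding weakly_m_continuous_def is_reduction_def total_red_def by blast
    have red: "is_reduction (is_pterm ar) R \<alpha> ts ps"
      using h rstep_mono total_pterm unfolding weakly_m_continuous_def is_reduction_def by blast
    show "weakly_p_continuous ar R \<alpha> ts ps \<and> total_red ar \<alpha> ts"
      unfolding weakly_p_continuous_def using red tr h lim unfolding weakly_m_continuous_def by blast
  qed
  have II: "total_red ar \<alpha> ts \<Longrightarrow> is_total ar t \<Longrightarrow> (t = pliminf ar (idx \<alpha>) ts \<longleftrightarrow> mlim (idx \<alpha>) ts t)"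
    using core[OF idx_ne, where ar=ar and ts=ts and t=t] unfolding total_red_def by auto
  have tr2: "weakly_m_continuous ar R \<alpha> ts ps \<Longrightarrow> total_red ar \<alpha> ts"
    unfolding weakly_m_continuous_def is_reduction_def total_red_def by blast
  show ?thesis
    using I II tr2 unfolding weakly_p_converges_def weakly_m_converges_def by blast
qed

end
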